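(* Let $m\ge1$ and $[m]=\{1<2<\dots<m\}$. For every poset ideal $\mathcal{J}\subseteq\mathrm{Hom}([m],\mathbb{N})$ the projected co-letterplace ideal $L^{p_2}([m],\mathcal{J})$ is a strongly stable $m$-regular ideal of $k[x_0,x_1,x_2,\dots]$, and $\mathcal{J}\mapsto L^{p_2}([m],\mathcal{J})$ is a one-to-one correspondence between poset ideals of $\mathrm{Hom}([m],\mathbb{N})$ and finitely generated strongly stable $m$-regular ideals of $k[x_0,x_1,x_2,\dots]$.
   Context: $\mathbb{N}=\{0,1,2,\dots\}$; $\mathrm{Hom}([m],\mathbb{N})$ is the set of weakly increasing maps $[m]\to\mathbb{N}$ ordered pointwise. A marker for $\mathcal{J}$ is a poset ideal $I=\{1,\dots,r\}\subseteq[m]$ ($0\le r\le m$) with an isotone $\alpha:I\to\mathbb{N}$ such that every isotone $\phi:[m]\to\mathbb{N}$ with $\phi|_I=\alpha$ lies in $\mathcal{J}$; its graph is $\Gamma\alpha=\{(a,\alpha(a)):a\in I\}$. $k$ is a field; the co-letterplace ideal $L([m],\mathcal{J})\subseteq k[x_{a,i}:(a,i)\in[m]\times\mathbb{N}]$ is generated by $\prod_{(a,i)\in\Gamma\alpha}x_{a,i}$ over all markers $\alpha$. $L^{p_2}([m],\mathcal{J})$ is the ideal of $k[x_0,x_1,\dots]$ generated by the images of these generators under $x_{a,i}\mapsto x_i$. A monomial ideal is strongly stable if for every monomial $u$ and $i<j$, $x_ju\in I$ implies $x_iu\in I$. A finitely generated ideal is $m$-regular if its Castelnuovo–Mumford regularity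 (in a polynomial subring in finitely many variables containing its generators) is at most $m$. *)

theory Defs
  imports Complex_Main "HOL-Library.Poly_Mapping"
begin

(* The polynomial ring k[x_0,x_1,x_2,...]: finitely supported maps from monomials
  (exponent vectors, nat \<Rightarrow>\<^sub>0 nat, variable x_i has index i) to coefficients. *)
type_synonym 'k poly_ring = "(nat \<Rightarrow>\<^sub>0 nat) \<Rightarrow>\<^sub>0 'k"

definition monom :: "(nat \<Rightarrow>\<^sub>0 nat) \<Rightarrow> 'k::comm_ring_1 poly_ring" where
  "monom u = Poly_Mapping.single u 1"

definition var_exp :: "nat \<Rightarrow> (nat \<Rightarrow>\<^sub>0 nat)" where
  "var_exp i = Poly_Mapping.single i 1"

definition is_ideal :: "'k::comm_ring_1 poly_ring set \<Rightarrow> bool" where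
  "is_ideal I = module.subspace (*) I"

definition ideal_gen :: "'k::comm_ring_1 poly_ring set \<Rightarrow> 'k poly_ring set" where
  "ideal_gen G = module.span (*) G"

definition fin_gen :: "'k::comm_ring_1 poly_ring set \<Rightarrow> bool" where
  "fin_gen I = (\<exists>G. finite G \<and> I = ideal_gen G)"

definition monomial_ideal :: "'k::comm_ring_1 poly_ring set \<Rightarrow> bool" where
  "monomial_ideal I = (\<exists>U. I = ideal_gen (monom ` U))"

definition strongly_stable :: "'k::comm_ring_1 poly_ring set \<Rightarrow> bool" where
  "strongly_stable I = (monomial_ideal I \<and>
     (\<forall>u i j. i < j \<longrightarrow> monom (u + var_exp j) \<in> I \<longrightarrow> monom (u + var_exp i) \<in> I))"

definition vars :: "'k::comm_ring_1 poly_ring \<Rightarrow> nat set" where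
  "vars p = (\<Union>u\<in>Poly_Mapping.keys p. Poly_Mapping.keys (u::nat \<Rightarrow>\<^sub>0 nat))"

(* Koszul complex K(x_0,...,x_{n-1}; I) of a monomial ideal I (of S = k[x_0..x_{n-1}]),
  in multidegree b.  K_i(I)_b = \<Oplus>_{|F|=i} I_{b - F} e_F, where I_c is spanned by the monomial
  x^c if x^c \<in> I and is zero otherwise.  Chains are coefficient functions on the index sets F. *)
definition sq_exp :: "nat set \<Rightarrow> (nat \<Rightarrow>\<^sub>0 nat)" where
  "sq_exp F = (\<Sum>j\<in>F. var_exp j)"

definition koszul_basis :: "'k::comm_ring_1 poly_ring set \<Rightarrow> nat \<Rightarrow> (nat \<Rightarrow>\<^sub>0 nat) \<Rightarrow> nat \<Rightarrow> nat set set" where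
  "koszul_basis I n b i = {F. F \<subseteq> {0..<n} \<and> card F = i \<and>
      (\<exists>c. b = c + sq_exp F \<and> monom c \<in> I)}"

definition koszul_chains :: "'k::field poly_ring set \<Rightarrow> nat \<Rightarrow> (nat \<Rightarrow>\<^sub>0 nat) \<Rightarrow> nat \<Rightarrow> (nat set \<Rightarrow>\<^sub>0 'k) set" where
  "koszul_chains I n b i = {f. Poly_Mapping.keys f \<subseteq> koszul_basis I n b i}"

(* Koszul differential: e_F \<mapsto> \<Sum>_{j\<in>F} (-1)^{#{l\<in>F. l<j}} x_j e_{F-{j}}; in multidegree b the
  factor x_j just identifies I_{b-F} with I_{b-(F-{j})}, so only the sign remains. *)
definition koszul_diff :: "(nat set \<Rightarrow>\<^sub>0 'k::field) \<Rightarrow> (nat set \<Rightarrow>\<^sub>0 'k)" where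
  "koszul_diff f = (\<Sum>F\<in>Poly_Mapping.keys f. \<Sum>j\<in>F.
      Poly_Mapping.single (F - {j}) ((-1) ^ card {l\<in>F. l < j} * Poly_Mapping.lookup f F))"

definition kscale :: "'k::field \<Rightarrow> (nat set \<Rightarrow>\<^sub>0 'k) \<Rightarrow> (nat set \<Rightarrow>\<^sub>0 'k)" where
  "kscale c f = Poly_Mapping.map (\<lambda>x. c * x) f"

(* Graded Betti number \<beta>_{i,b}(I) = dim_k Tor_i^S(I,k)_b = dim_k H_i(x_0..x_{n-1}; I)_b. *)
definition betti :: "'k::field poly_ring set \<Rightarrow> nat \<Rightarrow> nat \<Rightarrow> (nat \<Rightarrow>\<^sub>0 nat) \<Rightarrow> nat" where
  "betti I n i b =
     vector_space.dim kscale (koszul_chains I n b i \<inter> {f. koszul_diff f = 0})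
     - vector_space.dim kscale (koszul_diff ` koszul_chains I n b (Suc i))"

definition total_deg :: "(nat \<Rightarrow>\<^sub>0 nat) \<Rightarrow> nat" where
  "total_deg b = (\<Sum>j\<in>Poly_Mapping.keys b. Poly_Mapping.lookup b j)"

definition m_regular :: "nat \<Rightarrow> 'k::field poly_ring set \<Rightarrow> bool" where
  "m_regular m I = (monomial_ideal I \<and> fin_gen I \<and>
     (\<forall>n G. finite G \<and> I = ideal_gen G \<and> (\<forall>g\<in>G. vars g \<subseteq> {0..<n}) \<longrightarrow>
        (\<forall>i b. Poly_Mapping.keys b \<subseteq> {0..<n} \<and> betti I n i b \<noteq> 0 \<longrightarrow> total_deg b \<le> m + i)))"

(* Hom([m],\<nat>): weakly increasing maps {1..m} \<rightarrow> \<nat>, normalised to 0 outside {1..m}. *)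
definition hom_m :: "nat \<Rightarrow> (nat \<Rightarrow> nat) set" where
  "hom_m m = {f. mono_on {1..m} f \<and> (\<forall>a. a \<notin> {1..m} \<longrightarrow> f a = 0)}"

definition poset_ideal :: "nat \<Rightarrow> (nat \<Rightarrow> nat) set \<Rightarrow> bool" where
  "poset_ideal m J = (J \<subseteq> hom_m m \<and>
     (\<forall>\<phi>\<in>J. \<forall>\<psi>\<in>hom_m m. (\<forall>a\<in>{1..m}. \<psi> a \<le> \<phi> a) \<longrightarrow> \<psi> \<in> J))"

(* A marker: ideal I = {1..r} of [m] with isotone \<alpha> : I \<rightarrow> \<nat> such that every isotone
  extension to [m] lies in J (values of \<alpha> outside {1..r} are irrelevant). *)
definition marker :: "nat \<Rightarrow> (nat \<Rightarrow> nat) set \<Rightarrow> nat \<Rightarrow> (nat \<Rightarrow> nat) \<Rightarrow> bool" where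
  "marker m J r \<alpha> = (r \<le> m \<and> mono_on {1..r} \<alpha> \<and>
     (\<forall>\<phi>\<in>hom_m m. (\<forall>a\<in>{1..r}. \<phi> a = \<alpha> a) \<longrightarrow> \<phi> \<in> J))"

(* Image of the co-letterplace generator \<Prod>_{(a,i)\<in>\<Gamma>\<alpha>} x_{a,i} under x_{a,i} \<mapsto> x_i,
  i.e. the monomial \<Prod>_{a\<in>{1..r}} x_{\<alpha>(a)}. *)
definition p2_gen :: "nat \<Rightarrow> (nat \<Rightarrow> nat) \<Rightarrow> 'k::comm_ring_1 poly_ring" where
  "p2_gen r \<alpha> = monom (\<Sum>a\<in>{1..r}. var_exp (\<alpha> a))"

definition Lp2 :: "nat \<Rightarrow> (nat \<Rightarrow> nat) set \<Rightarrow> 'k::comm_ring_1 poly_ring set" where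
  "Lp2 m J = ideal_gen {p2_gen r \<alpha> | r \<alpha>. marker m J r \<alpha>}"

end

theory Submission
  imports Defs
begin

interpretation R: module "(*) :: 'k::comm_ring_1 poly_ring \<Rightarrow> _"
  by unfold_locales (auto simp: algebra_simps)

lemma ideal_gen_span: "ideal_gen G = R.span G"
  unfolding ideal_gen_def by simp

lemma monom_mult: "(monom u :: 'k::comm_ring_1 poly_ring) * monom v = monom (u + v)"
  unfolding monom_def by (simp add: mult_single)

lemma keys_monom[simp]: "Poly_Mapping.keys (monom u :: 'k::comm_ring_1 poly_ring) = {u}"
  unfolding monom_def by simp

lemma monom_nz[simp]: "(monom u :: 'k::comm_ring_1 poly_ring) \<noteq> 0"
  using keys_monom[of u] by (metis empty_iff insert_iff keys_zero)

lemma ideal_keys0: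
  assumes "p \<in> R.span (monom ` U :: 'k::comm_ring_1 poly_ring set)"
  shows "\<forall>k \<in> Poly_Mapping.keys p. \<exists>u\<in>U. \<exists>w. k = u + w"
  using assms
proof (induction p rule: R.span_induct_alt)
  case base then show ?case by simp
next
  case (step c x y)
  show ?case
  proof
    fix k assume k: "k \<in> Poly_Mapping.keys (c * x + y)"
    have "k \<in> Poly_Mapping.keys (c * x) \<or> k \<in> Poly_Mapping.keys y"
      using keys_add[of "c*x" y] k by blast
    then show "\<exists>u\<in>U. \<exists>w. k = u + w"
    proof
      assume "k \<in> Poly_Mapping.keys (c * x)"
      then obtain a b where "k = a + b" "b \<in> Poly_Mapping.keys x" using keys_mult[of c x] by blast
      moreover obtain u where "u \<in> U" "x = monom u" using step.hyps by blast
      ultimately have "k = u + a" by (simp add: add.commute)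
      then show ?thesis using \<open>u \<in> U\<close> by blast
    next
      assume "k \<in> Poly_Mapping.keys y" then show ?thesis using step.IH by blast
    qed
  qed
qed

lemma ideal_keys:
  assumes "p \<in> ideal_gen (monom ` U :: 'k::comm_ring_1 poly_ring set)" "k \<in> Poly_Mapping.keys p"
  shows "\<exists>u\<in>U. \<exists>w. k = u + w"
  using ideal_keys0[of p U] assms unfolding ideal_gen_span by blast

lemma ideal_mult: "p \<in> ideal_gen G \<Longrightarrow> (q::'k::comm_ring_1 poly_ring) * p \<in> ideal_gen G"
  unfolding ideal_gen_span by (rule R.span_scale)

lemma ideal_base: "p \<in> G \<Longrightarrow> (p::'k::comm_ring_1 poly_ring) \<in> ideal_gen G"
  unfolding ideal_gen_span by (rule R.span_base)

lemma monom_in_ideal: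
  "(monom u :: 'k::comm_ring_1 poly_ring) \<in> ideal_gen (monom ` U) \<longleftrightarrow> (\<exists>v\<in>U. \<exists>w. u = v + w)"
proof
  assume "monom u \<in> ideal_gen (monom ` U :: 'k poly_ring set)"
  then show "\<exists>v\<in>U. \<exists>w. u = v + w" using ideal_keys[of "monom u :: 'k poly_ring" U u] by auto
next
  assume "\<exists>v\<in>U. \<exists>w. u = v + w"
  then obtain v w where "v \<in> U" "u = v + w" by blast
  then have "(monom u :: 'k poly_ring) = monom w * monom v" by (simp add: monom_mult add.commute)
  moreover have "(monom v :: 'k poly_ring) \<in> ideal_gen (monom ` U)" using \<open>v\<in>U\<close> by (intro ideal_base) auto
  ultimately show "(monom u :: 'k poly_ring) \<in> ideal_gen (monom ` U)" using ideal_mult[of "monom v" "monom ` U" "monom w"] by simp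
qed

lemma monom_ideal_mult:
  "(monom u :: 'k::comm_ring_1 poly_ring) \<in> I \<Longrightarrow> I = ideal_gen G \<Longrightarrow> monom (u + w) \<in> I"
  using ideal_mult[of "monom u" G "monom w"] by (simp add: monom_mult add.commute)

lemma ideal_gen_eqI:
  assumes "\<And>u. u \<in> U \<Longrightarrow> \<exists>v\<in>V. \<exists>w. u = v + w" "\<And>v. v \<in> V \<Longrightarrow> \<exists>u\<in>U. \<exists>w. v = u + w"
  shows "ideal_gen (monom ` U :: 'k::comm_ring_1 poly_ring set) = ideal_gen (monom ` V)"
proof -
  have "monom ` U \<subseteq> R.span (monom ` V :: 'k poly_ring set)"
  proof (rule image_subsetI)
    fix u assume "u \<in> U"
    then have "(monom u :: 'k poly_ring) \<in> ideal_gen (monom ` V)"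
      unfolding monom_in_ideal using assms(1) by simp
    then show "(monom u :: 'k poly_ring) \<in> R.span (monom ` V)" by (simp add: ideal_gen_span)
  qed
  moreover have "monom ` V \<subseteq> R.span (monom ` U :: 'k poly_ring set)"
  proof (rule image_subsetI)
    fix u assume "u \<in> V"
    then have "(monom u :: 'k poly_ring) \<in> ideal_gen (monom ` U)"
      unfolding monom_in_ideal using assms(2) by simp
    then show "(monom u :: 'k poly_ring) \<in> R.span (monom ` U)" by (simp add: ideal_gen_span)
  qed
  ultimately show ?thesis unfolding ideal_gen_span R.span_eq by (rule conjI)
qed


definition E :: "nat \<Rightarrow> (nat \<Rightarrow> nat) \<Rightarrow> (nat \<Rightarrow>\<^sub>0 nat)" where
  "E r f = (\<Sum>a\<in>{1..r}. var_exp (f a))"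

definition cnt :: "nat \<Rightarrow> (nat \<Rightarrow> nat) \<Rightarrow> nat \<Rightarrow> nat" where
  "cnt r f v = card {a\<in>{1..r}. f a \<le> v}"

lemma lookup_var_exp: "Poly_Mapping.lookup (var_exp i) k = (if i = k then 1 else 0)"
  unfolding var_exp_def by (simp add: lookup_single)

lemma lookup_E: "Poly_Mapping.lookup (E r f) k = card {a\<in>{1..r}. f a = k}"
  unfolding E_def lookup_sum lookup_var_exp
  by (simp add: sum.If_cases Int_def conj_commute)

lemma E_cong: "(\<And>a. a \<in> {1..r} \<Longrightarrow> f a = g a) \<Longrightarrow> E r f = E r g"
  unfolding E_def by (rule sum.cong) auto

lemma cnt_E: "cnt r f v = (\<Sum>k\<le>v. Poly_Mapping.lookup (E r f) k)"
proof -
  have "{a\<in>{1..r}. f a \<le> v} = (\<Union>k\<in>{..v}. {a\<in>{1..r}. f a = k})" by auto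
  moreover have "card (\<Union>k\<in>{..v}. {a\<in>{1..r}. f a = k}) = (\<Sum>k\<le>v. card {a\<in>{1..r}. f a = k})"
    by (rule card_UN_disjoint) auto
  ultimately have "card {a\<in>{1..r}. f a \<le> v} = (\<Sum>k\<le>v. card {a\<in>{1..r}. f a = k})"
    by simp
  then show ?thesis unfolding cnt_def lookup_E .
qed

lemma cnt_mono_E:
  assumes "E m \<phi> = E r \<alpha> + w"
  shows "cnt r \<alpha> v \<le> cnt m \<phi> v"
  unfolding cnt_E assms lookup_add by (rule sum_mono) simp

lemma sort_le:
  assumes "mono_on {1..m} \<beta>" "mono_on {1..r} \<alpha>" "r \<le> m"
    and "\<And>v. cnt r \<alpha> v \<le> cnt m \<beta> v" and a: "a \<in> {1..r}"
  shows "\<beta> a \<le> \<alpha> a"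
proof (rule ccontr)
  assume "\<not> \<beta> a \<le> \<alpha> a"
  then have lt: "\<alpha> a < \<beta> a" by simp
  have "{1..a} \<subseteq> {b\<in>{1..r}. \<alpha> b \<le> \<alpha> a}"
    using a assms(2) by (auto intro: mono_onD)
  then have "card {1..a} \<le> cnt r \<alpha> (\<alpha> a)" unfolding cnt_def
    by (intro card_mono) auto
  then have "a \<le> cnt r \<alpha> (\<alpha> a)" by simp
  moreover have "{b\<in>{1..m}. \<beta> b \<le> \<alpha> a} \<subseteq> {1..a-1}"
  proof
    fix b assume b: "b \<in> {b\<in>{1..m}. \<beta> b \<le> \<alpha> a}"
    show "b \<in> {1..a-1}"
    proof (rule ccontr)
      assume "b \<notin> {1..a-1}"
      then have "a \<le> b" using b by auto
      then have "\<beta> a \<le> \<beta> b" using assms(1,3) a b by (auto intro: mono_onD)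
      then show False using b lt by auto
    qed
  qed
  then have "cnt m \<beta> (\<alpha> a) \<le> card {1..a-1}" unfolding cnt_def
    by (intro card_mono) auto
  then have "cnt m \<beta> (\<alpha> a) \<le> a - 1" by simp
  ultimately show False using assms(4)[of "\<alpha> a"] a by auto
qed


lemma total_deg_superset:
  assumes "finite S" "Poly_Mapping.keys b \<subseteq> S"
  shows "total_deg b = (\<Sum>j\<in>S. Poly_Mapping.lookup b j)"
  unfolding total_deg_def
  by (rule sum.mono_neutral_left) (use assms in \<open>auto simp: in_keys_iff\<close>)

lemma total_deg_add: "total_deg (b + c) = total_deg b + total_deg c"
proof -
  let ?S = "Poly_Mapping.keys b \<union> Poly_Mapping.keys c"
  have "Poly_Mapping.keys (b + c) \<subseteq> ?S" by (rule keys_add)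
  then show ?thesis
    using total_deg_superset[of ?S b] total_deg_superset[of ?S c] total_deg_superset[of ?S "b+c"]
    by (simp add: lookup_add sum.distrib)
qed

lemma total_deg_zero[simp]: "total_deg 0 = 0"
  unfolding total_deg_def by simp

lemma total_deg_var_exp[simp]: "total_deg (var_exp i) = 1"
  unfolding total_deg_def var_exp_def by simp

lemma total_deg_eq_0: "total_deg b = 0 \<longleftrightarrow> b = 0"
proof
  assume "total_deg b = 0"
  then have "\<forall>j\<in>Poly_Mapping.keys b. Poly_Mapping.lookup b j = 0"
    unfolding total_deg_def by simp
  then show "b = 0" by (metis ex_in_conv in_keys_iff keys_eq_empty)
qed simp

lemma total_deg_E: "total_deg (E r f) = r"
proof (induction r)
  case 0 then show ?case by (simp add: E_def)
next
  case (Suc r)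
  have "E (Suc r) f = E r f + var_exp (f (Suc r))"
    unfolding E_def by (simp add: atLeastAtMostSuc_conv add.commute)
  then show ?case using Suc by (simp add: total_deg_add)
qed

lemma le_keys_total_deg: "j \<in> Poly_Mapping.keys b \<Longrightarrow> Poly_Mapping.lookup b j \<le> total_deg b"
  unfolding total_deg_def by (rule member_le_sum) auto

lemma var_exp_split:
  assumes "q \<in> Poly_Mapping.keys c"
  shows "c = (c - var_exp q) + var_exp q"
  using assms by (intro poly_mapping_eqI) (auto simp: lookup_add lookup_minus lookup_var_exp in_keys_iff)

lemma sort_exists:
  "total_deg c = r \<Longrightarrow> \<exists>\<alpha>. mono_on {1..r} \<alpha> \<and> E r \<alpha> = c \<and> (\<forall>a\<in>{1..r}. \<alpha> a \<in> Poly_Mapping.keys c)"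
proof (induction r arbitrary: c)
  case 0
  then have "c = 0" using total_deg_eq_0 by auto
  then show ?case by (auto simp: E_def mono_on_def)
next
  case (Suc r)
  then have "c \<noteq> 0" using total_deg_eq_0 by auto
  then have ne: "Poly_Mapping.keys c \<noteq> {}" by simp
  define q where "q = Max (Poly_Mapping.keys c)"
  have q: "q \<in> Poly_Mapping.keys c" using ne unfolding q_def by simp
  have qmax: "\<And>j. j \<in> Poly_Mapping.keys c \<Longrightarrow> j \<le> q" unfolding q_def by simp
  define c' where "c' = c - var_exp q"
  have cc: "c = c' + var_exp q" unfolding c'_def using var_exp_split[OF q] .
  then have "total_deg c' = r" using Suc.prems by (simp add: total_deg_add)
  then obtain \<alpha> where \<alpha>: "mono_on {1..r} \<alpha>" "E r \<alpha> = c'" "\<forall>a\<in>{1..r}. \<alpha> a \<in> Poly_Mapping.keys c'"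
    using Suc.IH by blast
  have kc: "Poly_Mapping.keys c' \<subseteq> Poly_Mapping.keys c"
    using cc by (auto simp: in_keys_iff lookup_add)
  define \<beta> where "\<beta> = \<alpha>(Suc r := q)"
  have "mono_on {1..Suc r} \<beta>"
  proof (rule mono_onI)
    fix x y assume xy: "x \<in> {1..Suc r}" "y \<in> {1..Suc r}" "x \<le> y"
    show "\<beta> x \<le> \<beta> y"
    proof (cases "y = Suc r")
      case True
      show ?thesis
      proof (cases "x = Suc r")
        case True then show ?thesis using \<open>y = Suc r\<close> by simp
      next
        case False
        then have "x \<in> {1..r}" using xy by auto
        then have "\<alpha> x \<le> q" using \<alpha>(3) kc qmax by blast
        then show ?thesis using False True unfolding \<beta>_def by simp
      qed
    next
      case False
      then have "x \<noteq> Suc r" using xy by auto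
      then show ?thesis using False xy \<alpha>(1) unfolding \<beta>_def by (auto intro: mono_onD)
    qed
  qed
  moreover have "E (Suc r) \<beta> = c"
  proof -
    have "E (Suc r) \<beta> = E r \<beta> + var_exp q"
      unfolding E_def by (simp add: atLeastAtMostSuc_conv add.commute \<beta>_def)
    also have "E r \<beta> = E r \<alpha>" by (rule E_cong) (auto simp: \<beta>_def)
    finally show ?thesis using \<alpha>(2) cc by simp
  qed
  moreover have "\<forall>a\<in>{1..Suc r}. \<beta> a \<in> Poly_Mapping.keys c"
    using \<alpha>(3) kc q unfolding \<beta>_def by auto
  ultimately show ?case by blast
qed


definition ext :: "nat \<Rightarrow> nat \<Rightarrow> (nat \<Rightarrow> nat) \<Rightarrow> (nat \<Rightarrow> nat) \<Rightarrow> nat \<Rightarrow> nat" where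
  "ext m r \<alpha> \<phi> a = (if a \<in> {1..r} then \<alpha> a else if a \<in> {1..m} then max (\<alpha> r) (\<phi> a) else 0)"

lemma ext_hom:
  assumes "r \<le> m" "mono_on {1..r} \<alpha>" "\<phi> \<in> hom_m m"
  shows "ext m r \<alpha> \<phi> \<in> hom_m m"
proof -
  have phm: "mono_on {1..m} \<phi>" using assms(3) unfolding hom_m_def by auto
  have "mono_on {1..m} (ext m r \<alpha> \<phi>)"
  proof (rule mono_onI)
    fix x y assume xy: "x \<in> {1..m}" "y \<in> {1..m}" "x \<le> y"
    show "ext m r \<alpha> \<phi> x \<le> ext m r \<alpha> \<phi> y"
    proof (cases "y \<le> r")
      case True
      then show ?thesis using xy assms(2) unfolding ext_def by (auto intro: mono_onD)
    next
      case False
      note F = False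
      show ?thesis
      proof (cases "x \<le> r")
        case True
        then have "\<alpha> x \<le> \<alpha> r" using xy assms(2) by (auto intro: mono_onD)
        then show ?thesis using True F xy unfolding ext_def by auto
      next
        case False
        have "\<phi> x \<le> \<phi> y" using xy phm by (auto intro: mono_onD)
        then show ?thesis using False F xy unfolding ext_def by auto
      qed
    qed
  qed
  then show ?thesis using assms(1) unfolding hom_m_def ext_def by auto
qed

lemma ext_in_J:
  assumes "marker m J r \<alpha>" "\<phi> \<in> hom_m m"
  shows "ext m r \<alpha> \<phi> \<in> J"
proof -
  have "r \<le> m" "mono_on {1..r} \<alpha>" using assms(1) unfolding marker_def by auto
  then have "ext m r \<alpha> \<phi> \<in> hom_m m" using ext_hom assms(2) by blast
  moreover have "\<forall>a\<in>{1..r}. ext m r \<alpha> \<phi> a = \<alpha> a" unfolding ext_def by auto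
  ultimately show ?thesis using assms(1) unfolding marker_def by blast
qed

lemma ext_ge: "a \<in> {1..m} \<Longrightarrow> a \<notin> {1..r} \<Longrightarrow> \<phi> a \<le> ext m r \<alpha> \<phi> a"
  unfolding ext_def by auto

lemma ext_eq: "a \<in> {1..r} \<Longrightarrow> ext m r \<alpha> \<phi> a = \<alpha> a"
  unfolding ext_def by auto

lemma poset_down:
  "poset_ideal m J \<Longrightarrow> \<psi> \<in> J \<Longrightarrow> \<phi> \<in> hom_m m \<Longrightarrow> (\<forall>a\<in>{1..m}. \<phi> a \<le> \<psi> a) \<Longrightarrow> \<phi> \<in> J"
  unfolding poset_ideal_def by blast

lemma marker_down:
  assumes J: "poset_ideal m J" and mk: "marker m J r \<alpha>" and mb: "mono_on {1..r} \<beta>"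
    and le: "\<forall>a\<in>{1..r}. \<beta> a \<le> \<alpha> a"
  shows "marker m J r \<beta>"
proof -
  have rm: "r \<le> m" using mk unfolding marker_def by auto
  have "\<phi> \<in> J" if \<phi>: "\<phi> \<in> hom_m m" "\<forall>a\<in>{1..r}. \<phi> a = \<beta> a" for \<phi>
  proof -
    have "ext m r \<alpha> \<phi> \<in> J" using ext_in_J mk \<phi>(1) by blast
    moreover have "\<forall>a\<in>{1..m}. \<phi> a \<le> ext m r \<alpha> \<phi> a"
    proof
      fix a assume a: "a \<in> {1..m}"
      show "\<phi> a \<le> ext m r \<alpha> \<phi> a"
      proof (cases "a \<in> {1..r}")
        case True then show ?thesis using \<phi>(2) le ext_eq[OF True] by simp
      next
        case False then show ?thesis using ext_ge a by blast
      qed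
    qed
    ultimately show ?thesis using poset_down J \<phi>(1) by blast
  qed
  then show ?thesis using rm mb unfolding marker_def by blast
qed

definition MU :: "nat \<Rightarrow> (nat \<Rightarrow> nat) set \<Rightarrow> (nat \<Rightarrow>\<^sub>0 nat) set" where
  "MU m J = {E r \<alpha> | r \<alpha>. marker m J r \<alpha>}"

lemma Lp2_eq: "Lp2 m J = (ideal_gen (monom ` MU m J) :: 'k::comm_ring_1 poly_ring set)"
proof -
  have "{p2_gen r \<alpha> | r \<alpha>. marker m J r \<alpha>} = (monom ` MU m J :: 'k::comm_ring_1 poly_ring set)"
    unfolding MU_def p2_gen_def E_def by auto
  then show ?thesis unfolding Lp2_def by simp
qed

lemma MU_deg: "u \<in> MU m J \<Longrightarrow> total_deg u \<le> m"
  unfolding MU_def marker_def using total_deg_E by auto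

lemma E_update:
  assumes "a0 \<in> {1..r}"
  shows "E r (\<alpha>(a0 := i)) + var_exp (\<alpha> a0) = E r \<alpha> + var_exp i"
proof -
  have "E r \<alpha> = var_exp (\<alpha> a0) + (\<Sum>a\<in>{1..r}-{a0}. var_exp (\<alpha> a))"
    unfolding E_def using assms by (simp add: sum.remove)
  moreover have "E r (\<alpha>(a0 := i)) = var_exp i + (\<Sum>a\<in>{1..r}-{a0}. var_exp (\<alpha> a))"
    unfolding E_def using assms by (simp add: sum.remove)
  ultimately show ?thesis by (simp add: algebra_simps)
qed

lemma Lp2_strongly_stable:
  assumes J: "poset_ideal m J"
  shows "strongly_stable (Lp2 m J :: 'k::comm_ring_1 poly_ring set)"
  unfolding strongly_stable_def
proof (intro conjI allI impI)
  show "monomial_ideal (Lp2 m J :: 'k poly_ring set)"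
    unfolding monomial_ideal_def Lp2_eq by blast
next
  fix u i j assume ij: "(i::nat) < j" and mem: "(monom (u + var_exp j) :: 'k poly_ring) \<in> Lp2 m J"
  from mem obtain v w where v: "v \<in> MU m J" and uw: "u + var_exp j = v + w"
    unfolding Lp2_eq monom_in_ideal by blast
  from v obtain r \<alpha> where mk: "marker m J r \<alpha>" and vE: "v = E r \<alpha>" unfolding MU_def by blast
  show "(monom (u + var_exp i) :: 'k poly_ring) \<in> Lp2 m J"
  proof (cases "j \<in> Poly_Mapping.keys w")
    case True
    have "u + var_exp i = v + (w - var_exp j + var_exp i)"
    proof (rule poly_mapping_eqI)
      fix k
      have "Poly_Mapping.lookup (u + var_exp j) k = Poly_Mapping.lookup (v + w) k" using uw by simp
      then show "Poly_Mapping.lookup (u + var_exp i) k = Poly_Mapping.lookup (v + (w - var_exp j + var_exp i)) k"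
        using True by (auto simp: lookup_add lookup_minus lookup_var_exp in_keys_iff split: if_splits)
    qed
    then show ?thesis unfolding Lp2_eq monom_in_ideal using v by blast
  next
    case False
    have "Poly_Mapping.lookup (u + var_exp j) j = Poly_Mapping.lookup (v + w) j" using uw by simp
    then have "Poly_Mapping.lookup v j \<noteq> 0" using False by (simp add: lookup_add lookup_var_exp in_keys_iff)
    then have "{a\<in>{1..r}. \<alpha> a = j} \<noteq> {}" unfolding vE lookup_E by (metis card.empty)
    then obtain a0 where a0: "a0 \<in> {1..r}" "\<alpha> a0 = j" by blast
    define \<gamma> where "\<gamma> = \<alpha>(a0 := i)"
    have E\<gamma>: "E r \<gamma> + var_exp j = E r \<alpha> + var_exp i" using E_update[OF a0(1), of \<alpha> i] a0(2) unfolding \<gamma>_def by simp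
    obtain \<beta> where \<beta>: "mono_on {1..r} \<beta>" "E r \<beta> = E r \<gamma>"
      using sort_exists[of "E r \<gamma>" r] total_deg_E by blast
    have ma: "mono_on {1..r} \<alpha>" using mk unfolding marker_def by auto
    have "cnt r \<alpha> v' \<le> cnt r \<beta> v'" for v'
    proof -
      have "cnt r \<beta> v' = cnt r \<gamma> v'" unfolding cnt_E \<beta>(2) ..
      moreover have "cnt r \<alpha> v' \<le> cnt r \<gamma> v'" unfolding cnt_def
        by (rule card_mono) (use a0 ij in \<open>auto simp: \<gamma>_def\<close>)
      ultimately show ?thesis by simp
    qed
    then have "\<forall>a\<in>{1..r}. \<beta> a \<le> \<alpha> a" using sort_le[OF \<beta>(1) ma] by blast
    then have mkb: "marker m J r \<beta>" using marker_down[OF J mk \<beta>(1)] by blast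
    have "(u + var_exp i) + var_exp j = (E r \<beta> + w) + var_exp j"
    proof -
      have "(u + var_exp i) + var_exp j = (u + var_exp j) + var_exp i" by (simp add: algebra_simps)
      also have "\<dots> = E r \<alpha> + var_exp i + w" using uw vE by (simp add: algebra_simps)
      also have "\<dots> = E r \<gamma> + var_exp j + w" using E\<gamma> by simp
      finally show ?thesis using \<beta>(2) by (simp add: algebra_simps)
    qed
    then have "u + var_exp i = E r \<beta> + w" by simp
    moreover have "E r \<beta> \<in> MU m J" using mkb unfolding MU_def by blast
    ultimately show ?thesis unfolding Lp2_eq monom_in_ideal by blast
  qed
qed


definition restr :: "nat \<Rightarrow> (nat \<Rightarrow> nat) \<Rightarrow> nat \<Rightarrow> nat" where
  "restr k \<alpha> a = (if a \<in> {1..k} then \<alpha> a else 0)"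

definition Pk :: "nat \<Rightarrow> nat \<Rightarrow> (nat \<Rightarrow> nat) set" where
  "Pk k T = {\<gamma>. \<forall>x. (x \<in> {1..k} \<longrightarrow> \<gamma> x \<in> {..<T}) \<and> (x \<notin> {1..k} \<longrightarrow> \<gamma> x = 0)}"

lemma finite_Pk: "finite (Pk k T)"
  unfolding Pk_def by (rule finite_set_of_finite_funs) auto

definition NM :: "nat \<Rightarrow> (nat \<Rightarrow> nat) set \<Rightarrow> nat \<Rightarrow> nat \<Rightarrow> (nat \<Rightarrow> nat) set" where
  "NM m J k T = {\<gamma>\<in>Pk k T. mono_on {1..k} \<gamma> \<and> \<not> marker m J k \<gamma>}"

definition wit :: "nat \<Rightarrow> (nat \<Rightarrow> nat) set \<Rightarrow> nat \<Rightarrow> (nat \<Rightarrow> nat) \<Rightarrow> nat \<Rightarrow> nat" where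
  "wit m J k \<gamma> = (SOME \<phi>. \<phi> \<in> hom_m m \<and> (\<forall>a\<in>{1..k}. \<phi> a = \<gamma> a) \<and> \<phi> \<notin> J)"

primrec Tseq :: "nat \<Rightarrow> (nat \<Rightarrow> nat) set \<Rightarrow> nat \<Rightarrow> nat" where
  "Tseq m J 0 = 1"
| "Tseq m J (Suc k) = max (Tseq m J k)
     (Suc (Max (insert 0 ((\<lambda>\<gamma>. wit m J k \<gamma> m) ` NM m J k (Tseq m J k)))))"

lemma Tseq_mono: "k \<le> k' \<Longrightarrow> Tseq m J k \<le> Tseq m J k'"
  by (rule lift_Suc_mono_le[of "Tseq m J"]) auto

lemma Tseq_pos: "0 < Tseq m J k"
  by (induction k) auto

lemma marker_restr: "marker m J k (restr k \<alpha>) \<longleftrightarrow> marker m J k \<alpha>"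
proof -
  have "mono_on {1..k} (restr k \<alpha>) \<longleftrightarrow> mono_on {1..k} \<alpha>"
    unfolding mono_on_def restr_def by auto
  then show ?thesis unfolding marker_def restr_def by auto
qed

lemma E_restr: "E k (restr k \<alpha>) = E k \<alpha>"
  by (rule E_cong) (simp add: restr_def)

lemma wit_props:
  assumes "\<gamma> \<in> NM m J k T" "k \<le> m"
  shows "wit m J k \<gamma> \<in> hom_m m \<and> (\<forall>a\<in>{1..k}. wit m J k \<gamma> a = \<gamma> a) \<and> wit m J k \<gamma> \<notin> J"
proof -
  have "\<exists>\<phi>. \<phi> \<in> hom_m m \<and> (\<forall>a\<in>{1..k}. \<phi> a = \<gamma> a) \<and> \<phi> \<notin> J"
    using assms unfolding NM_def marker_def by blast
  then show ?thesis unfolding wit_def by (rule someI_ex)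
qed

lemma reduce_marker:
  assumes J: "poset_ideal m J" and mk: "marker m J r \<alpha>"
  shows "\<exists>k\<le>r. marker m J k \<alpha> \<and> (\<forall>a\<in>{1..k}. \<alpha> a < Tseq m J k)"
proof -
  have rm: "r \<le> m" and ma: "mono_on {1..r} \<alpha>" using mk unfolding marker_def by auto
  define P where "P k = (k = r \<or> Tseq m J (Suc k) \<le> \<alpha> (Suc k))" for k
  define k0 where "k0 = (LEAST k. P k)"
  have Pk0: "P k0" unfolding k0_def by (rule LeastI[of P r]) (simp add: P_def)
  have k0r: "k0 \<le> r" unfolding k0_def by (rule Least_le) (simp add: P_def)
  have notP: "\<not> P k" if "k < k0" for k using not_less_Least[of k P] that unfolding k0_def by blast
  have bnd: "\<forall>a\<in>{1..k0}. \<alpha> a < Tseq m J k0"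
  proof
    fix a assume a: "a \<in> {1..k0}"
    then have "\<not> P (a - 1)" using notP by auto
    moreover have sa: "Suc (a - 1) = a" using a by auto
    ultimately have "\<alpha> (Suc (a - 1)) < Tseq m J (Suc (a - 1))" unfolding P_def by linarith
    then have "\<alpha> a < Tseq m J a" unfolding sa .
    also have "\<dots> \<le> Tseq m J k0" using a by (auto intro: Tseq_mono)
    finally show "\<alpha> a < Tseq m J k0" .
  qed
  have "marker m J k0 \<alpha>"
  proof (cases "k0 = r")
    case True then show ?thesis using mk by simp
  next
    case False
    then have k0r': "k0 < r" and big: "Tseq m J (Suc k0) \<le> \<alpha> (Suc k0)"
      using Pk0 k0r unfolding P_def by auto
    show ?thesis
    proof (rule ccontr)
      assume nm: "\<not> marker m J k0 \<alpha>"
      let ?\<gamma> = "restr k0 \<alpha>"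
      have mono0: "mono_on {1..k0} \<alpha>" using ma k0r by (auto intro: mono_on_subset)
      then have "mono_on {1..k0} ?\<gamma>" unfolding mono_on_def restr_def by auto
      moreover have "?\<gamma> \<in> Pk k0 (Tseq m J k0)" using bnd unfolding Pk_def restr_def by auto
      moreover have "\<not> marker m J k0 ?\<gamma>" using nm marker_restr by blast
      ultimately have g: "?\<gamma> \<in> NM m J k0 (Tseq m J k0)" unfolding NM_def by blast
      define \<phi> where "\<phi> = wit m J k0 ?\<gamma>"
      have \<phi>: "\<phi> \<in> hom_m m" "\<forall>a\<in>{1..k0}. \<phi> a = \<alpha> a" "\<phi> \<notin> J"
        using wit_props[OF g] k0r rm unfolding \<phi>_def restr_def by auto
      have "\<phi> m \<le> Max (insert 0 ((\<lambda>\<gamma>. wit m J k0 \<gamma> m) ` NM m J k0 (Tseq m J k0)))"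
        unfolding \<phi>_def by (rule Max_ge) (use g finite_Pk in \<open>auto simp: NM_def\<close>)
      then have \<phi>m: "\<phi> m < \<alpha> (Suc k0)" using big by simp
      have "ext m r \<alpha> \<phi> \<in> J" using ext_in_J mk \<phi>(1) by blast
      moreover have "\<forall>a\<in>{1..m}. \<phi> a \<le> ext m r \<alpha> \<phi> a"
      proof
        fix a assume a: "a \<in> {1..m}"
        show "\<phi> a \<le> ext m r \<alpha> \<phi> a"
        proof (cases "a \<le> k0")
          case True then show ?thesis using \<phi>(2) a ext_eq[of a r] k0r by auto
        next
          case False
          show ?thesis
          proof (cases "a \<le> r")
            case True
            have "\<phi> a \<le> \<phi> m" using \<phi>(1) a unfolding hom_m_def by (auto intro: mono_onD)
            also have "\<dots> < \<alpha> (Suc k0)" by (rule \<phi>m)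
            also have "\<dots> \<le> \<alpha> a" using ma False True by (auto intro: mono_onD)
            also have "\<dots> = ext m r \<alpha> \<phi> a" using False True a ext_eq[of a r] by auto
            finally show ?thesis by simp
          next
            case False then show ?thesis using ext_ge a by auto
          qed
        qed
      qed
      ultimately have "\<phi> \<in> J" using poset_down J \<phi>(1) by blast
      then show False using \<phi>(3) by blast
    qed
  qed
  then show ?thesis using k0r bnd by blast
qed

definition SU :: "nat \<Rightarrow> (nat \<Rightarrow> nat) set \<Rightarrow> (nat \<Rightarrow>\<^sub>0 nat) set" where
  "SU m J = {E k \<alpha> | k \<alpha>. marker m J k \<alpha> \<and> (\<forall>a\<in>{1..k}. \<alpha> a < Tseq m J m)}"

lemma finite_SU: "finite (SU m J)"
proof -
  have "SU m J \<subseteq> (\<lambda>(k, \<gamma>). E k \<gamma>) ` ({0..m} \<times> Pk m (Tseq m J m))"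
  proof
    fix u assume "u \<in> SU m J"
    then obtain k \<alpha> where u: "u = E k \<alpha>" "marker m J k \<alpha>" "\<forall>a\<in>{1..k}. \<alpha> a < Tseq m J m"
      unfolding SU_def by blast
    then have km: "k \<le> m" unfolding marker_def by auto
    have "restr k \<alpha> \<in> Pk m (Tseq m J m)" using u(3) km Tseq_pos[of m J m] unfolding Pk_def restr_def by auto
    moreover have "u = E k (restr k \<alpha>)" using u(1) E_restr by simp
    moreover have "(k, restr k \<alpha>) \<in> {0..m} \<times> Pk m (Tseq m J m)" using km calculation(1) by simp
    ultimately show "u \<in> (\<lambda>(k, \<gamma>). E k \<gamma>) ` ({0..m} \<times> Pk m (Tseq m J m))"
      by (intro image_eqI[of _ _ "(k, restr k \<alpha>)"]) simp_all
  qed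
  moreover have "finite ({0..m} \<times> Pk m (Tseq m J m))" using finite_Pk by blast
  ultimately show ?thesis using finite_subset by blast
qed

lemma E_split: "k \<le> r \<Longrightarrow> E r \<alpha> = E k \<alpha> + (\<Sum>a\<in>{Suc k..r}. var_exp (\<alpha> a))"
proof -
  assume "k \<le> r"
  then have "{1..r} = {1..k} \<union> {Suc k..r}" by auto
  moreover have "{1..k} \<inter> {Suc k..r} = {}" by auto
  ultimately show ?thesis unfolding E_def by (simp add: sum.union_disjoint)
qed

lemma Lp2_SU:
  assumes J: "poset_ideal m J"
  shows "Lp2 m J = (ideal_gen (monom ` SU m J) :: 'k::comm_ring_1 poly_ring set)"
  unfolding Lp2_eq[where 'k='k]
proof (rule ideal_gen_eqI[where 'k='k])
  fix u assume "u \<in> MU m J"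
  then obtain r \<alpha> where u: "u = E r \<alpha>" "marker m J r \<alpha>" unfolding MU_def by blast
  then have rm: "r \<le> m" unfolding marker_def by auto
  obtain k where k: "k \<le> r" "marker m J k \<alpha>" "\<forall>a\<in>{1..k}. \<alpha> a < Tseq m J k"
    using reduce_marker[OF J u(2)] by blast
  have "Tseq m J k \<le> Tseq m J m" using k(1) rm by (intro Tseq_mono) simp
  then have "\<forall>a\<in>{1..k}. \<alpha> a < Tseq m J m" using k(3) by (meson less_le_trans)
  then have "E k \<alpha> \<in> SU m J" using k(2) unfolding SU_def by auto
  moreover have "u = E k \<alpha> + (\<Sum>a\<in>{Suc k..r}. var_exp (\<alpha> a))" using E_split[OF k(1)] u(1) by simp
  ultimately show "\<exists>v\<in>SU m J. \<exists>w. u = v + w" by blast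
next
  fix v assume "v \<in> SU m J"
  then obtain k \<alpha> where "v = E k \<alpha>" "marker m J k \<alpha>" unfolding SU_def by blast
  then have "v \<in> MU m J" unfolding MU_def by blast
  then show "\<exists>u\<in>MU m J. \<exists>w. v = u + w" by (intro bexI[of _ v] exI[of _ 0]) simp_all
qed

lemma Lp2_fin_gen:
  assumes "poset_ideal m J" shows "fin_gen (Lp2 m J :: 'k::comm_ring_1 poly_ring set)"
proof -
  have "finite (monom ` SU m J :: 'k poly_ring set)" using finite_SU by blast
  then show ?thesis unfolding fin_gen_def using Lp2_SU[OF assms, where 'k='k] by blast
qed


definition lin_ext :: "(nat set \<Rightarrow> 'k::field \<Rightarrow> (nat set \<Rightarrow>\<^sub>0 'k)) \<Rightarrow> (nat set \<Rightarrow>\<^sub>0 'k) \<Rightarrow> (nat set \<Rightarrow>\<^sub>0 'k)" where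
  "lin_ext T y = (\<Sum>G\<in>Poly_Mapping.keys y. T G (Poly_Mapping.lookup y G))"

definition linT :: "(nat set \<Rightarrow> 'k::field \<Rightarrow> (nat set \<Rightarrow>\<^sub>0 'k)) \<Rightarrow> bool" where
  "linT T = (\<forall>G a b. T G (a + b) = T G a + T G b)"

lemma linT_zero: "linT T \<Longrightarrow> T G 0 = 0"
  unfolding linT_def by (metis add_cancel_right_right add_0)

lemma lin_ext_superset:
  assumes "linT T" "finite S" "Poly_Mapping.keys y \<subseteq> S"
  shows "lin_ext T y = (\<Sum>G\<in>S. T G (Poly_Mapping.lookup y G))"
  unfolding lin_ext_def
  by (rule sum.mono_neutral_left) (use assms linT_zero in \<open>auto simp: in_keys_iff\<close>)

lemma lin_ext_add:
  assumes "linT T" shows "lin_ext T (x + y) = lin_ext T x + lin_ext T y"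
proof -
  let ?S = "Poly_Mapping.keys x \<union> Poly_Mapping.keys y"
  have k: "Poly_Mapping.keys (x + y) \<subseteq> ?S" by (rule keys_add)
  have "lin_ext T (x + y) = (\<Sum>G\<in>?S. T G (Poly_Mapping.lookup (x + y) G))"
    using lin_ext_superset[OF assms _ k] by simp
  also have "\<dots> = (\<Sum>G\<in>?S. T G (Poly_Mapping.lookup x G)) + (\<Sum>G\<in>?S. T G (Poly_Mapping.lookup y G))"
    using assms unfolding linT_def by (simp add: lookup_add sum.distrib)
  also have "\<dots> = lin_ext T x + lin_ext T y"
    using lin_ext_superset[OF assms, of ?S x] lin_ext_superset[OF assms, of ?S y] by simp
  finally show ?thesis .
qed

lemma lin_ext_zero[simp]: "lin_ext T 0 = 0"
  unfolding lin_ext_def by simp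

lemma lin_ext_single:
  assumes "linT T" shows "lin_ext T (Poly_Mapping.single G c) = T G c"
proof (cases "c = 0")
  case True then show ?thesis using linT_zero[OF assms] by simp
next
  case False then show ?thesis unfolding lin_ext_def by simp
qed

lemma lin_ext_sum:
  assumes "linT T" shows "lin_ext T (\<Sum>x\<in>A. f x) = (\<Sum>x\<in>A. lin_ext T (f x))"
  by (induction A rule: infinite_finite_induct) (auto simp: lin_ext_add[OF assms])

lemma pm_expand: "y = (\<Sum>G\<in>Poly_Mapping.keys y. Poly_Mapping.single G (Poly_Mapping.lookup y G))"
proof (rule poly_mapping_eqI)
  fix k
  have "Poly_Mapping.lookup (\<Sum>G\<in>Poly_Mapping.keys y. Poly_Mapping.single G (Poly_Mapping.lookup y G)) k
     = (\<Sum>G\<in>Poly_Mapping.keys y. if G = k then Poly_Mapping.lookup y G else 0)"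
    unfolding lookup_sum by (rule sum.cong) (auto simp: lookup_single when_def)
  also have "\<dots> = Poly_Mapping.lookup y k" by (simp add: in_keys_iff)
  finally show "Poly_Mapping.lookup y k = Poly_Mapping.lookup (\<Sum>G\<in>Poly_Mapping.keys y. Poly_Mapping.single G (Poly_Mapping.lookup y G)) k" by simp
qed

lemma lin_ext_expand:
  assumes "linT T"
  shows "lin_ext T y = (\<Sum>G\<in>Poly_Mapping.keys y. lin_ext T (Poly_Mapping.single G (Poly_Mapping.lookup y G)))"
proof -
  have "\<And>G. lin_ext T (Poly_Mapping.single G (Poly_Mapping.lookup y G)) = T G (Poly_Mapping.lookup y G)"
    using lin_ext_single[OF assms] by blast
  then show ?thesis unfolding lin_ext_def[of T y] by simp
qed

lemma homotopy:
  assumes T1: "linT T1" and T2: "linT T2"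
    and H: "\<And>G. G \<in> Poly_Mapping.keys z \<Longrightarrow>
      lin_ext T1 (lin_ext T2 (Poly_Mapping.single G (Poly_Mapping.lookup z G)))
      + lin_ext T2 (lin_ext T1 (Poly_Mapping.single G (Poly_Mapping.lookup z G)))
      = Poly_Mapping.single G (Poly_Mapping.lookup z G)"
  shows "lin_ext T1 (lin_ext T2 z) + lin_ext T2 (lin_ext T1 z) = z"
proof -
  let ?s = "\<lambda>G. Poly_Mapping.single G (Poly_Mapping.lookup z G)"
  have "lin_ext T1 (lin_ext T2 z) = (\<Sum>G\<in>Poly_Mapping.keys z. lin_ext T1 (lin_ext T2 (?s G)))"
    unfolding lin_ext_expand[OF T2, of z] lin_ext_sum[OF T1] ..
  moreover have "lin_ext T2 (lin_ext T1 z) = (\<Sum>G\<in>Poly_Mapping.keys z. lin_ext T2 (lin_ext T1 (?s G)))"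
    unfolding lin_ext_expand[OF T1, of z] lin_ext_sum[OF T2] ..
  ultimately have "lin_ext T1 (lin_ext T2 z) + lin_ext T2 (lin_ext T1 z)
      = (\<Sum>G\<in>Poly_Mapping.keys z. lin_ext T1 (lin_ext T2 (?s G)) + lin_ext T2 (lin_ext T1 (?s G)))"
    by (simp add: sum.distrib)
  also have "\<dots> = (\<Sum>G\<in>Poly_Mapping.keys z. ?s G)" using H by (rule sum.cong[OF refl])
  also have "\<dots> = z" using pm_expand[of z] by simp
  finally show ?thesis .
qed

definition ksgn :: "nat set \<Rightarrow> nat \<Rightarrow> 'k::field" where
  "ksgn F j = (-1) ^ card {l\<in>F. l < j}"

definition Td :: "nat set \<Rightarrow> 'k::field \<Rightarrow> (nat set \<Rightarrow>\<^sub>0 'k)" where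
  "Td F c = (\<Sum>j\<in>F. Poly_Mapping.single (F - {j}) (ksgn F j * c))"

definition Th :: "nat \<Rightarrow> nat set \<Rightarrow> 'k::field \<Rightarrow> (nat set \<Rightarrow>\<^sub>0 'k)" where
  "Th q G c = (if q \<in> G then 0 else Poly_Mapping.single (insert q G) ((-1) ^ card G * c))"

lemma linT_Td: "linT Td"
  unfolding linT_def Td_def by (simp add: distrib_left single_add sum.distrib)

lemma linT_Th: "linT (Th q)"
  unfolding linT_def Th_def by (simp add: distrib_left single_add)

lemma koszul_diff_eq: "koszul_diff f = lin_ext Td f"
  unfolding koszul_diff_def lin_ext_def Td_def ksgn_def ..

lemma neg1_pow_pred: "1 \<le> n \<Longrightarrow> ((-1::'k::field) ^ (n - 1)) = - ((-1) ^ n)"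
  by (cases n) auto

lemma single_identity:
  assumes F: "finite F" and le: "\<forall>x\<in>F. x \<le> q"
  shows "lin_ext Td (lin_ext (Th q) (Poly_Mapping.single F c))
       + lin_ext (Th q) (lin_ext Td (Poly_Mapping.single F c)) = Poly_Mapping.single F (c::'k::field)"
proof -
  have hd: "lin_ext (Th q) (lin_ext Td (Poly_Mapping.single F c))
      = (\<Sum>j\<in>F. Th q (F - {j}) (ksgn F j * c))"
    unfolding lin_ext_single[OF linT_Td] Td_def lin_ext_sum[OF linT_Th] lin_ext_single[OF linT_Th] ..
  show ?thesis
  proof (cases "q \<in> F")
    case True
    have "lin_ext Td (lin_ext (Th q) (Poly_Mapping.single F c)) = 0"
      unfolding lin_ext_single[OF linT_Th] Th_def using True by simp
    moreover have "(\<Sum>j\<in>F. Th q (F - {j}) (ksgn F j * c)) = Th q (F - {q}) (ksgn F q * c)"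
    proof -
      have "(\<Sum>j\<in>F. Th q (F - {j}) (ksgn F j * c)) = (\<Sum>j\<in>F. if j = q then Th q (F - {q}) (ksgn F q * c) else 0)"
        by (rule sum.cong) (auto simp: Th_def True)
      also have "\<dots> = Th q (F - {q}) (ksgn F q * c)" using True F by simp
      finally show ?thesis .
    qed
    moreover have "Th q (F - {q}) (ksgn F q * c) = Poly_Mapping.single F c"
    proof -
      have e: "{l\<in>F. l < q} = F - {q}" using le by force
      have ins: "insert q (F - {q}) = F" using True by auto
      have "((-1::'k) ^ card (F - {q})) * (ksgn F q * c) = ((-1) ^ card (F - {q}) * (-1) ^ card (F - {q})) * c"
        unfolding ksgn_def e by (simp add: algebra_simps)
      also have "\<dots> = c" by (simp add: power_add[symmetric])
      finally have eq: "((-1::'k) ^ card (F - {q})) * (ksgn F q * c) = c" .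
      have "q \<notin> F - {q}" by simp
      then have "Th q (F - {q}) (ksgn F q * c) = Poly_Mapping.single (insert q (F - {q})) ((-1::'k) ^ card (F - {q}) * (ksgn F q * c))"
        unfolding Th_def by simp
      then show ?thesis by (simp only: ins eq)
    qed
    ultimately show ?thesis using hd by simp
  next
    case False
    let ?x = "(-1::'k) ^ card F * c"
    have dh: "lin_ext Td (lin_ext (Th q) (Poly_Mapping.single F c)) = Td (insert q F) ?x"
      unfolding lin_ext_single[OF linT_Th] Th_def using False lin_ext_single[OF linT_Td] by simp
    have "Td (insert q F) ?x = Poly_Mapping.single (insert q F - {q}) (ksgn (insert q F) q * ?x)
        + (\<Sum>j\<in>F. Poly_Mapping.single (insert q F - {j}) (ksgn (insert q F) j * ?x))"
      unfolding Td_def using False F by simp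
    also have "ksgn (insert q F) q * ?x = c"
    proof -
      have e: "{l\<in>insert q F. l < q} = F"
      proof
        show "{l\<in>insert q F. l < q} \<subseteq> F" by auto
        show "F \<subseteq> {l\<in>insert q F. l < q}"
        proof
          fix x assume "x \<in> F"
          then have "x \<le> q" "x \<noteq> q" using le False by auto
          then show "x \<in> {l\<in>insert q F. l < q}" using \<open>x \<in> F\<close> by simp
        qed
      qed
      have "ksgn (insert q F) q * ?x = ((-1) ^ card F * (-1) ^ card F) * c"
        unfolding ksgn_def e by (simp add: algebra_simps)
      also have "\<dots> = c" by (simp add: power_add[symmetric])
      finally show ?thesis .
    qed
    also have "insert q F - {q} = F" using False by auto
    also have "(\<Sum>j\<in>F. Poly_Mapping.single (insert q F - {j}) (ksgn (insert q F) j * ?x))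
        = (\<Sum>j\<in>F. Poly_Mapping.single (insert q (F - {j})) (ksgn F j * ?x))"
    proof (rule sum.cong[OF refl])
      fix j assume j: "j \<in> F"
      then have jq: "j < q" using le False by (metis order_le_less)
      have "{l\<in>insert q F. l < j} = {l\<in>F. l < j}" using jq by auto
      moreover have "insert q F - {j} = insert q (F - {j})" using jq by auto
      ultimately show "Poly_Mapping.single (insert q F - {j}) (ksgn (insert q F) j * ?x)
          = Poly_Mapping.single (insert q (F - {j})) (ksgn F j * ?x)" unfolding ksgn_def by simp
    qed
    finally have dh2: "lin_ext Td (lin_ext (Th q) (Poly_Mapping.single F c))
        = Poly_Mapping.single F c + (\<Sum>j\<in>F. Poly_Mapping.single (insert q (F - {j})) (ksgn F j * ?x))"
      using dh by simp
    have "(\<Sum>j\<in>F. Th q (F - {j}) (ksgn F j * c)) = (\<Sum>j\<in>F. - Poly_Mapping.single (insert q (F - {j})) (ksgn F j * ?x))"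
    proof (rule sum.cong[OF refl])
      fix j assume j: "j \<in> F"
      have "card (F - {j}) = card F - 1" using j F by simp
      moreover have "1 \<le> card F" using j F by (metis One_nat_def Suc_leI card_gt_0_iff empty_iff)
      ultimately have "(-1::'k) ^ card (F - {j}) = - ((-1) ^ card F)" using neg1_pow_pred by metis
      then show "Th q (F - {j}) (ksgn F j * c) = - Poly_Mapping.single (insert q (F - {j})) (ksgn F j * ?x)"
        unfolding Th_def using False by (simp add: single_uminus[symmetric] algebra_simps)
    qed
    then show ?thesis using hd dh2 by (simp add: sum_negf)
  qed
qed


lemma lookup_kscale: "Poly_Mapping.lookup (kscale c f) G = c * Poly_Mapping.lookup f G"
  unfolding kscale_def Poly_Mapping.map.rep_eq by (simp add: when_def)

interpretation V: vector_space "kscale :: 'k::field \<Rightarrow> (nat set \<Rightarrow>\<^sub>0 'k) \<Rightarrow> _"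
  by unfold_locales (auto intro!: poly_mapping_eqI simp: lookup_kscale lookup_add algebra_simps)

lemma kscale_single: "kscale c (Poly_Mapping.single G 1) = Poly_Mapping.single G (c::'k::field)"
  by (intro poly_mapping_eqI) (simp add: lookup_kscale lookup_single when_def)

lemma in_span_singles:
  assumes "Poly_Mapping.keys (y :: nat set \<Rightarrow>\<^sub>0 'k::field) \<subseteq> S"
  shows "y \<in> V.span ((\<lambda>G. Poly_Mapping.single G 1) ` S)"
proof -
  have "y = (\<Sum>G\<in>Poly_Mapping.keys y. kscale (Poly_Mapping.lookup y G) (Poly_Mapping.single G 1))"
    using pm_expand[of y] by (simp add: kscale_single)
  also have "\<dots> \<in> V.span ((\<lambda>G. Poly_Mapping.single G 1) ` S)"
    by (intro V.span_sum V.span_scale V.span_base) (use assms in auto)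
  finally show ?thesis .
qed

lemma dim_le_if_subset:
  assumes "K \<subseteq> Img" "Img \<subseteq> V.span W" "finite W"
  shows "V.dim K \<le> V.dim (Img :: (nat set \<Rightarrow>\<^sub>0 'k::field) set)"
proof -
  obtain B where B: "B \<subseteq> Img" "V.independent B" "Img \<subseteq> V.span B" "card B = V.dim Img"
    using V.basis_exists by blast
  have "B \<subseteq> V.span W" using B(1) assms(2) by blast
  then have fB: "finite B" using V.independent_span_bound[OF assms(3) B(2)] by blast
  have "V.dim K \<le> card B" using V.dim_le_card[OF _ fB] assms(1) B(3) by blast
  then show ?thesis using B(4) by simp
qed

lemma lookup_sq_exp: "finite F \<Longrightarrow> Poly_Mapping.lookup (sq_exp F) k = (if k \<in> F then 1 else 0)"
  unfolding sq_exp_def lookup_sum var_exp_def by (simp add: lookup_single when_def)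

lemma sq_exp_insert: "finite F \<Longrightarrow> q \<notin> F \<Longrightarrow> sq_exp (insert q F) = sq_exp F + var_exp q"
  unfolding sq_exp_def by (simp add: add.commute)

lemma total_deg_sq_exp: assumes "finite F" shows "total_deg (sq_exp F) = card F"
proof -
  have "Poly_Mapping.keys (sq_exp F) \<subseteq> F" using assms by (auto simp: in_keys_iff lookup_sq_exp split: if_splits)
  then show ?thesis using total_deg_superset[of F "sq_exp F"] assms by (simp add: lookup_sq_exp)
qed

definition SSP :: "'k::comm_ring_1 poly_ring set \<Rightarrow> bool" where
  "SSP I = (\<forall>u i j. i < j \<longrightarrow> monom (u + var_exp j) \<in> I \<longrightarrow> monom (u + var_exp i) \<in> I)"

lemma drop_max:
  assumes I: "I = ideal_gen (monom ` U :: 'k::comm_ring_1 poly_ring set)" and deg: "\<forall>u\<in>U. total_deg u \<le> m"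
    and ss: "SSP I" and c: "monom c \<in> I" "m < total_deg c"
    and q: "q \<in> Poly_Mapping.keys c" "\<forall>x\<in>Poly_Mapping.keys c. x \<le> q"
  shows "monom (c - var_exp q) \<in> I"
proof -
  obtain u w where u: "u \<in> U" and cuw: "c = u + w" using c(1) unfolding I monom_in_ideal by blast
  have "total_deg w > 0" using deg u c(2) cuw total_deg_add[of u w] by auto
  then have "w \<noteq> 0" by auto
  show ?thesis
  proof (cases "q \<in> Poly_Mapping.keys w")
    case True
    have "c - var_exp q = u + (w - var_exp q)"
      using True cuw by (intro poly_mapping_eqI) (auto simp: lookup_add lookup_minus lookup_var_exp in_keys_iff)
    then show ?thesis unfolding I monom_in_ideal using u by blast
  next
    case False
    obtain p where p: "p \<in> Poly_Mapping.keys w" using \<open>w \<noteq> 0\<close> by (metis all_not_in_conv keys_eq_empty)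
    have "p \<in> Poly_Mapping.keys c" using p cuw by (auto simp: in_keys_iff lookup_add)
    then have pq: "p < q" using q(2) p False by (metis order_le_less)
    have uq: "q \<in> Poly_Mapping.keys u" using q(1) False cuw by (auto simp: in_keys_iff lookup_add)
    have "monom u \<in> I" unfolding I monom_in_ideal using u by (intro bexI[of _ u] exI[of _ 0]) simp_all
    moreover have "u = (u - var_exp q) + var_exp q" using var_exp_split[OF uq] .
    ultimately have "monom ((u - var_exp q) + var_exp q) \<in> I" by simp
    then have "monom ((u - var_exp q) + var_exp p) \<in> I" using ss pq unfolding SSP_def by blast
    then have "monom ((u - var_exp q) + var_exp p + (w - var_exp p)) \<in> I"
      using monom_ideal_mult I by blast
    moreover have "(u - var_exp q) + var_exp p + (w - var_exp p) = c - var_exp q"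
      using uq p cuw by (intro poly_mapping_eqI) (auto simp: lookup_add lookup_minus lookup_var_exp in_keys_iff)
    ultimately show ?thesis by simp
  qed
qed


lemma basis_facts:
  assumes "F \<in> koszul_basis I n b i"
  shows "finite F" "F \<subseteq> Poly_Mapping.keys b" "F \<subseteq> {0..<n}" "card F = i"
    "\<exists>c. b = c + sq_exp F \<and> monom c \<in> I"
proof -
  show fin: "finite F" using assms unfolding koszul_basis_def by (auto intro: finite_subset)
  show "F \<subseteq> {0..<n}" "card F = i" "\<exists>c. b = c + sq_exp F \<and> monom c \<in> I"
    using assms unfolding koszul_basis_def by auto
  then obtain c where "b = c + sq_exp F" by blast
  then show "F \<subseteq> Poly_Mapping.keys b" using fin by (auto simp: in_keys_iff lookup_add lookup_sq_exp)
qed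

lemma keys_lin_ext:
  "Poly_Mapping.keys (lin_ext T y) \<subseteq> (\<Union>G\<in>Poly_Mapping.keys y. Poly_Mapping.keys (T G (Poly_Mapping.lookup y G)))"
  unfolding lin_ext_def by (rule keys_sum)

lemma basis_up:
  assumes I: "I = ideal_gen (monom ` U :: 'k::field poly_ring set)" and deg: "\<forall>u\<in>U. total_deg u \<le> m"
    and ss: "SSP I" and b: "Poly_Mapping.keys b \<subseteq> {0..<n}" "m + i < total_deg b"
    and q: "q \<in> Poly_Mapping.keys b" "\<forall>x\<in>Poly_Mapping.keys b. x \<le> q"
    and F: "F \<in> koszul_basis I n b i" "q \<notin> F"
  shows "insert q F \<in> koszul_basis I n b (Suc i)"
proof -
  note bf = basis_facts[OF F(1)]
  obtain c where c: "b = c + sq_exp F" "monom c \<in> I" using bf(5) by blast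
  have "total_deg b = total_deg c + i" using c(1) total_deg_add total_deg_sq_exp bf(1,4) by simp
  then have tc: "m < total_deg c" using b(2) by simp
  have lk: "Poly_Mapping.lookup b x = Poly_Mapping.lookup c x + (if x \<in> F then 1 else 0)" for x
    using c(1) bf(1) by (simp add: lookup_add lookup_sq_exp)
  have qc: "q \<in> Poly_Mapping.keys c" using q(1) F(2) lk[of q] by (simp add: in_keys_iff)
  have kc: "\<forall>x\<in>Poly_Mapping.keys c. x \<le> q"
  proof
    fix x assume "x \<in> Poly_Mapping.keys c"
    then have "x \<in> Poly_Mapping.keys b" using lk[of x] by (simp add: in_keys_iff)
    then show "x \<le> q" using q(2) by blast
  qed
  have m1: "monom (c - var_exp q) \<in> I" using drop_max[OF I deg ss c(2) tc qc kc] .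
  have "b = (c - var_exp q) + sq_exp (insert q F)"
  proof (rule poly_mapping_eqI)
    fix k
    show "Poly_Mapping.lookup b k = Poly_Mapping.lookup ((c - var_exp q) + sq_exp (insert q F)) k"
      using lk[of k] qc bf(1) F(2) by (auto simp: lookup_add lookup_minus lookup_var_exp lookup_sq_exp in_keys_iff)
  qed
  moreover have "insert q F \<subseteq> {0..<n}" using bf(3) q(1) b(1) by auto
  moreover have "card (insert q F) = Suc i" using bf(1,4) F(2) by simp
  ultimately show ?thesis unfolding koszul_basis_def using m1 by blast
qed

lemma h_chains:
  assumes I: "I = ideal_gen (monom ` U :: 'k::field poly_ring set)" and deg: "\<forall>u\<in>U. total_deg u \<le> m"
    and ss: "SSP I" and b: "Poly_Mapping.keys b \<subseteq> {0..<n}" "m + i < total_deg b"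
    and q: "q \<in> Poly_Mapping.keys b" "\<forall>x\<in>Poly_Mapping.keys b. x \<le> q"
    and z: "z \<in> koszul_chains I n b i"
  shows "lin_ext (Th q) z \<in> koszul_chains I n b (Suc i)"
proof -
  have "Poly_Mapping.keys (Th q G (Poly_Mapping.lookup z G)) \<subseteq> koszul_basis I n b (Suc i)"
    if G: "G \<in> Poly_Mapping.keys z" for G
  proof (cases "q \<in> G")
    case True then show ?thesis unfolding Th_def by simp
  next
    case False
    have "G \<in> koszul_basis I n b i" using z G unfolding koszul_chains_def by blast
    then have "insert q G \<in> koszul_basis I n b (Suc i)" using basis_up[OF I deg ss b q] False by blast
    then show ?thesis unfolding Th_def using False by simp
  qed
  then show ?thesis using keys_lin_ext[of "Th q" z] unfolding koszul_chains_def by blast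
qed

lemma d_keys:
  assumes "f \<in> koszul_chains I n b j"
  shows "Poly_Mapping.keys (koszul_diff f) \<subseteq> Pow {0..<n}"
proof -
  have "Poly_Mapping.keys (Td F (Poly_Mapping.lookup f F)) \<subseteq> Pow {0..<n}" if F: "F \<in> Poly_Mapping.keys f" for F
  proof -
    have "F \<subseteq> {0..<n}" using F assms basis_facts(3) unfolding koszul_chains_def by blast
    have "Poly_Mapping.keys (Td F (Poly_Mapping.lookup f F)) \<subseteq>
        (\<Union>j\<in>F. Poly_Mapping.keys (Poly_Mapping.single (F - {j}) (ksgn F j * Poly_Mapping.lookup f F)))"
      unfolding Td_def by (rule keys_sum)
    also have "\<dots> \<subseteq> Pow {0..<n}" using \<open>F \<subseteq> {0..<n}\<close> by auto
    finally show ?thesis .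
  qed
  then show ?thesis unfolding koszul_diff_eq using keys_lin_ext[of Td f] by blast
qed

theorem betti_vanish:
  assumes I: "I = ideal_gen (monom ` U :: 'k::field poly_ring set)" and deg: "\<forall>u\<in>U. total_deg u \<le> m"
    and ss: "SSP I" and b: "Poly_Mapping.keys b \<subseteq> {0..<n}" "m + i < total_deg b"
  shows "betti I n i b = 0"
proof -
  have "b \<noteq> 0" using b(2) by auto
  then have ne: "Poly_Mapping.keys b \<noteq> {}" by simp
  define q where "q = Max (Poly_Mapping.keys b)"
  have q: "q \<in> Poly_Mapping.keys b" "\<forall>x\<in>Poly_Mapping.keys b. x \<le> q"
    using ne unfolding q_def by auto
  define K where "K = koszul_chains I n b i \<inter> {f. koszul_diff f = 0}"
  define Img where "Img = koszul_diff ` koszul_chains I n b (Suc i)"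
  have KI: "K \<subseteq> Img"
  proof
    fix z assume z: "z \<in> K"
    have zc: "z \<in> koszul_chains I n b i" and dz: "lin_ext Td z = 0"
      using z unfolding K_def koszul_diff_eq by auto
    have "lin_ext Td (lin_ext (Th q) z) + lin_ext (Th q) (lin_ext Td z) = z"
    proof (rule homotopy[OF linT_Td linT_Th])
      fix G assume G: "G \<in> Poly_Mapping.keys z"
      then have Gb: "G \<in> koszul_basis I n b i" using zc unfolding koszul_chains_def by blast
      have "finite G" "\<forall>x\<in>G. x \<le> q" using basis_facts(1,2)[OF Gb] q(2) by auto
      then show "lin_ext Td (lin_ext (Th q) (Poly_Mapping.single G (Poly_Mapping.lookup z G)))
          + lin_ext (Th q) (lin_ext Td (Poly_Mapping.single G (Poly_Mapping.lookup z G)))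
          = Poly_Mapping.single G (Poly_Mapping.lookup z G)" by (rule single_identity)
    qed
    then have "z = koszul_diff (lin_ext (Th q) z)" using dz unfolding koszul_diff_eq by simp
    moreover have "lin_ext (Th q) z \<in> koszul_chains I n b (Suc i)"
      using h_chains[OF I deg ss b q zc] .
    ultimately show "z \<in> Img" unfolding Img_def by blast
  qed
  have "Img \<subseteq> V.span ((\<lambda>G. Poly_Mapping.single G 1) ` Pow {0..<n})"
  proof
    fix y assume "y \<in> Img"
    then obtain f where "f \<in> koszul_chains I n b (Suc i)" "y = koszul_diff f" unfolding Img_def by blast
    then have "Poly_Mapping.keys y \<subseteq> Pow {0..<n}" using d_keys by blast
    then show "y \<in> V.span ((\<lambda>G. Poly_Mapping.single G 1) ` Pow {0..<n})" by (rule in_span_singles)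
  qed
  then have "V.dim K \<le> V.dim Img" using dim_le_if_subset[OF KI] by blast
  then show ?thesis unfolding betti_def K_def[symmetric] Img_def[symmetric] by simp
qed


lemma single0_mult_monom:
  "Poly_Mapping.single 0 a * monom k = (Poly_Mapping.single k a :: 'k::comm_ring_1 poly_ring)"
  unfolding monom_def by (simp add: mult_single)

lemma poly_in_monom_ideal:
  "(g :: 'k::comm_ring_1 poly_ring) \<in> ideal_gen (monom ` Poly_Mapping.keys g)"
proof -
  have "g = (\<Sum>k\<in>Poly_Mapping.keys g. Poly_Mapping.single 0 (Poly_Mapping.lookup g k) * monom k)"
    using pm_expand[of g] by (simp add: single0_mult_monom)
  also have "\<dots> \<in> ideal_gen (monom ` Poly_Mapping.keys g)"
    unfolding ideal_gen_span by (intro R.span_sum R.span_scale R.span_base) auto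
  finally show ?thesis .
qed

lemma finite_monomial_gens:
  assumes mi: "monomial_ideal (I :: 'k::comm_ring_1 poly_ring set)" and fg: "fin_gen I"
  shows "\<exists>K. finite K \<and> I = ideal_gen (monom ` K)"
proof -
  obtain U where U: "I = ideal_gen (monom ` U)" using mi unfolding monomial_ideal_def by blast
  obtain G where G: "finite G" "I = ideal_gen G" using fg unfolding fin_gen_def by blast
  define K where "K = (\<Union>g\<in>G. Poly_Mapping.keys g)"
  have fK: "finite K" unfolding K_def using G(1) by simp
  have "(monom ` K :: 'k poly_ring set) \<subseteq> I"
  proof
    fix x :: "'k poly_ring" assume "x \<in> monom ` K"
    then obtain g k where gk: "g \<in> G" "k \<in> Poly_Mapping.keys g" "x = monom k" unfolding K_def by blast
    have "g \<in> I" using gk(1) G(2) ideal_base by blast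
    then obtain u w where "u \<in> U" "k = u + w" using ideal_keys[of g U k] U gk(2) by blast
    then show "x \<in> I" unfolding gk(3) U monom_in_ideal by blast
  qed
  then have s1: "ideal_gen (monom ` K) \<subseteq> I"
    unfolding ideal_gen_span using G(2) unfolding ideal_gen_span by (intro R.span_minimal) auto
  have "G \<subseteq> ideal_gen (monom ` K)"
  proof
    fix g assume g: "g \<in> G"
    have "ideal_gen (monom ` Poly_Mapping.keys g) \<subseteq> ideal_gen (monom ` K)"
      unfolding ideal_gen_span K_def using g by (intro R.span_mono) blast
    then show "g \<in> ideal_gen (monom ` K)" using poly_in_monom_ideal[of g] by blast
  qed
  then have "I \<subseteq> ideal_gen (monom ` K)" unfolding G(2) ideal_gen_span by (intro R.span_minimal) auto
  then show ?thesis using s1 fK by blast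
qed

lemma basis0:
  assumes "monom b \<in> I"
  shows "koszul_basis I n b 0 = {{}}"
proof -
  have e: "F = {}" if "F \<subseteq> {0..<n}" "card F = 0" for F :: "nat set"
    using that by (metis card_0_eq finite_atLeastLessThan finite_subset)
  show ?thesis unfolding koszul_basis_def sq_exp_def using assms e by auto
qed

lemma basis1:
  assumes min: "\<forall>j\<in>Poly_Mapping.keys b. monom (b - var_exp j) \<notin> I"
  shows "koszul_basis I n b 1 = {}"
proof (rule ccontr)
  assume "koszul_basis I n b 1 \<noteq> {}"
  then obtain F where F: "F \<in> koszul_basis I n b 1" by blast
  then obtain j where Fj: "F = {j}" unfolding koszul_basis_def by (auto simp: card_1_singleton_iff)
  obtain c where c: "b = c + sq_exp F" "monom c \<in> I" using F unfolding koszul_basis_def by blast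
  have bc: "b = c + var_exp j" using c(1) Fj by (simp add: sq_exp_def)
  then have "j \<in> Poly_Mapping.keys b" by (simp add: in_keys_iff lookup_add lookup_var_exp)
  moreover have "b - var_exp j = c" using bc by simp
  ultimately show False using min c(2) by auto
qed

lemma betti0_min:
  assumes mb: "monom b \<in> (I :: 'k::field poly_ring set)"
    and min: "\<forall>j\<in>Poly_Mapping.keys b. monom (b - var_exp j) \<notin> I"
  shows "betti I n 0 b = 1"
proof -
  have c0: "koszul_chains I n b 0 = {f. Poly_Mapping.keys f \<subseteq> {{}}}"
    unfolding koszul_chains_def basis0[OF mb] ..
  have c1: "koszul_chains I n b (Suc 0) = {0}"
    unfolding koszul_chains_def using basis1[OF min] by auto
  have K: "koszul_chains I n b 0 \<inter> {f. koszul_diff f = 0} = koszul_chains I n b 0"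
  proof -
    have "koszul_diff f = 0" if "Poly_Mapping.keys f \<subseteq> {{}}" for f :: "nat set \<Rightarrow>\<^sub>0 'k"
    proof -
      have "koszul_diff f = (\<Sum>F\<in>Poly_Mapping.keys f. 0)"
        unfolding koszul_diff_def by (rule sum.cong) (use that in auto)
      then show ?thesis by simp
    qed
    then show ?thesis unfolding c0 by auto
  qed
  have d1: "V.dim (koszul_chains I n b 0) = 1"
  proof (rule V.dim_unique[of "{Poly_Mapping.single {} 1}"])
    show "{Poly_Mapping.single {} 1} \<subseteq> koszul_chains I n b 0" unfolding c0 by simp
    show "koszul_chains I n b 0 \<subseteq> V.span {Poly_Mapping.single {} (1::'k)}"
      unfolding c0 using in_span_singles[of _ "{{}}"] by auto
    have "Poly_Mapping.single {} (1::'k) \<noteq> 0" by (metis lookup_single_eq lookup_zero one_neq_zero)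
    then show "V.independent {Poly_Mapping.single {} (1::'k)}" by simp
    show "card {Poly_Mapping.single {} (1::'k)} = 1" by simp
  qed
  have d0: "V.dim (koszul_diff ` koszul_chains I n b (Suc 0)) = 0"
  proof -
    have "koszul_diff ` koszul_chains I n b (Suc 0) = {0::nat set \<Rightarrow>\<^sub>0 'k}"
      unfolding c1 by (simp add: koszul_diff_def)
    moreover have "V.dim {0::nat set \<Rightarrow>\<^sub>0 'k} \<le> card ({} :: (nat set \<Rightarrow>\<^sub>0 'k) set)"
      by (rule V.dim_le_card) auto
    ultimately show ?thesis by simp
  qed
  show ?thesis using d0 d1 unfolding betti_def K by simp
qed


lemma lower_one:
  assumes ss: "SSP I" and I: "I = ideal_gen (G :: 'k::comm_ring_1 poly_ring set)"
    and mem: "monom (E r f) \<in> I" and x: "x \<in> {1..r}" and v: "v \<le> f x"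
  shows "monom (E r (f(x := v))) \<in> I"
proof (cases "v = f x")
  case True then show ?thesis using mem by simp
next
  case False
  then have vl: "v < f x" using v by simp
  have "{a\<in>{1..r}. f a = f x} \<noteq> {}" using x by blast
  then have "Poly_Mapping.lookup (E r f) (f x) \<noteq> 0" unfolding lookup_E by simp
  then have fk: "f x \<in> Poly_Mapping.keys (E r f)" by (simp add: in_keys_iff)
  define u where "u = E r f - var_exp (f x)"
  have Eu: "E r f = u + var_exp (f x)" unfolding u_def by (rule var_exp_split[OF fk])
  then have "monom (u + var_exp v) \<in> I" using ss vl mem unfolding SSP_def by metis
  moreover have "E r (f(x := v)) = u + var_exp v"
  proof -
    have "E r (f(x := v)) + var_exp (f x) = (u + var_exp v) + var_exp (f x)"
      using E_update[OF x, of f v] Eu by (simp add: algebra_simps)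
    then show ?thesis by simp
  qed
  ultimately show ?thesis by simp
qed

lemma lower:
  assumes ss: "SSP I" and I: "I = ideal_gen (G :: 'k::comm_ring_1 poly_ring set)"
    and mem: "monom (E r \<phi>) \<in> I" and le: "\<forall>a\<in>{1..r}. \<psi> a \<le> \<phi> a"
  shows "monom (E r \<psi>) \<in> I"
proof -
  have "S \<subseteq> {1..r} \<Longrightarrow> monom (E r (\<lambda>a. if a \<in> S then \<psi> a else \<phi> a)) \<in> I" if "finite S" for S
    using that
  proof (induction S rule: finite_induct)
    case empty then show ?case using mem by simp
  next
    case (insert x S)
    let ?f = "\<lambda>a. if a \<in> S then \<psi> a else \<phi> a"
    have "monom (E r ?f) \<in> I" using insert by simp
    moreover have "x \<in> {1..r}" using insert by simp
    moreover have "\<psi> x \<le> ?f x" using insert le by simp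
    ultimately have "monom (E r (?f(x := \<psi> x))) \<in> I" using lower_one[OF ss I] by blast
    moreover have "?f(x := \<psi> x) = (\<lambda>a. if a \<in> insert x S then \<psi> a else \<phi> a)" by auto
    ultimately show ?case by simp
  qed
  from this[of "{1..r}"] have "monom (E r (\<lambda>a. if a \<in> {1..r} then \<psi> a else \<phi> a)) \<in> I" by simp
  moreover have "E r (\<lambda>a. if a \<in> {1..r} then \<psi> a else \<phi> a) = E r \<psi>" by (rule E_cong) simp
  ultimately show ?thesis by simp
qed

definition J_of :: "nat \<Rightarrow> 'k::comm_ring_1 poly_ring set \<Rightarrow> (nat \<Rightarrow> nat) set" where
  "J_of m I = {\<phi>\<in>hom_m m. monom (E m \<phi>) \<in> I}"

lemma J_of_poset:
  assumes "SSP I" "I = ideal_gen (G :: 'k::comm_ring_1 poly_ring set)"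
  shows "poset_ideal m (J_of m I)"
  unfolding poset_ideal_def J_of_def using lower[OF assms] by blast

lemma hom_marker: "\<phi> \<in> hom_m m \<Longrightarrow> \<phi> \<in> J \<Longrightarrow> marker m J m \<phi>"
proof -
  assume \<phi>: "\<phi> \<in> hom_m m" "\<phi> \<in> J"
  have "\<psi> = \<phi>" if "\<psi> \<in> hom_m m" "\<forall>a\<in>{1..m}. \<psi> a = \<phi> a" for \<psi>
  proof
    fix a show "\<psi> a = \<phi> a" using that \<phi>(1) unfolding hom_m_def by (cases "a \<in> {1..m}") auto
  qed
  then show ?thesis using \<phi> unfolding marker_def hom_m_def by auto
qed

lemma recover:
  assumes J: "poset_ideal m J"
  shows "J_of m (Lp2 m J :: 'k::comm_ring_1 poly_ring set) = J"
proof
  show "J \<subseteq> J_of m (Lp2 m J :: 'k poly_ring set)"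
  proof
    fix \<phi> assume \<phi>: "\<phi> \<in> J"
    then have h: "\<phi> \<in> hom_m m" using J unfolding poset_ideal_def by blast
    then have "E m \<phi> \<in> MU m J" using hom_marker \<phi> unfolding MU_def by blast
    then have "(monom (E m \<phi>) :: 'k poly_ring) \<in> Lp2 m J"
      unfolding Lp2_eq monom_in_ideal by (intro bexI[of _ "E m \<phi>"] exI[of _ 0]) simp_all
    then show "\<phi> \<in> J_of m (Lp2 m J :: 'k poly_ring set)" unfolding J_of_def using h by blast
  qed
next
  show "J_of m (Lp2 m J :: 'k poly_ring set) \<subseteq> J"
  proof
    fix \<phi> assume "\<phi> \<in> J_of m (Lp2 m J :: 'k poly_ring set)"
    then have h: "\<phi> \<in> hom_m m" and mem: "(monom (E m \<phi>) :: 'k poly_ring) \<in> Lp2 m J"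
      unfolding J_of_def by auto
    obtain v w where v: "v \<in> MU m J" "E m \<phi> = v + w" using mem unfolding Lp2_eq monom_in_ideal by blast
    obtain r \<alpha> where mk: "marker m J r \<alpha>" "v = E r \<alpha>" using v(1) unfolding MU_def by blast
    have rm: "r \<le> m" and ma: "mono_on {1..r} \<alpha>" using mk(1) unfolding marker_def by auto
    have mp: "mono_on {1..m} \<phi>" using h unfolding hom_m_def by auto
    have "cnt r \<alpha> x \<le> cnt m \<phi> x" for x using cnt_mono_E v(2) mk(2) by blast
    then have le: "\<forall>a\<in>{1..r}. \<phi> a \<le> \<alpha> a" using sort_le[OF mp ma rm] by blast
    have "ext m r \<alpha> \<phi> \<in> J" using ext_in_J[OF mk(1) h] .
    moreover have "\<forall>a\<in>{1..m}. \<phi> a \<le> ext m r \<alpha> \<phi> a"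
    proof
      fix a assume a: "a \<in> {1..m}"
      show "\<phi> a \<le> ext m r \<alpha> \<phi> a"
      proof (cases "a \<in> {1..r}")
        case True then show ?thesis using le ext_eq[OF True] by simp
      next
        case False then show ?thesis using ext_ge a by blast
      qed
    qed
    ultimately show "\<phi> \<in> J" using poset_down J h by blast
  qed
qed


lemma const_hom: "(\<lambda>a. if a \<in> {1..m} then N else 0) \<in> hom_m m"
  unfolding hom_m_def mono_on_def by auto

lemma sub_split:
  fixes k v :: "nat \<Rightarrow>\<^sub>0 nat"
  assumes "\<forall>x. Poly_Mapping.lookup k x \<le> Poly_Mapping.lookup v x" shows "v = k + (v - k)"
proof (rule poly_mapping_eqI)
  fix x show "Poly_Mapping.lookup v x = Poly_Mapping.lookup (k + (v - k)) x"
    using assms[rule_format, of x] by (simp add: lookup_add lookup_minus)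
qed

lemma surj_part:
  fixes I :: "'k::field poly_ring set"
  assumes fg: "fin_gen I" and ss: "strongly_stable I" and reg: "m_regular m I"
  shows "poset_ideal m (J_of m I) \<and> Lp2 m (J_of m I) = I"
proof -
  have mi: "monomial_ideal I" and ssp: "SSP I" using ss unfolding strongly_stable_def SSP_def by auto
  obtain K where fK: "finite K" and IK: "I = ideal_gen (monom ` K)"
    using finite_monomial_gens[OF mi fg] by blast
  define n where "n = Suc (Max (insert 0 (\<Union>k\<in>K. Poly_Mapping.keys k)))"
  have kn: "Poly_Mapping.keys k \<subseteq> {0..<n}" if "k \<in> K" for k
  proof
    fix x assume "x \<in> Poly_Mapping.keys k"
    then have "x \<le> Max (insert 0 (\<Union>k\<in>K. Poly_Mapping.keys k))"
      using that fK by (intro Max_ge) auto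
    then show "x \<in> {0..<n}" unfolding n_def by simp
  qed
  have vK: "\<forall>g\<in>(monom ` K :: 'k poly_ring set). vars g \<subseteq> {0..<n}"
    using kn unfolding vars_def by auto
  have regb: "\<And>i b. Poly_Mapping.keys b \<subseteq> {0..<n} \<Longrightarrow> betti I n i b \<noteq> 0 \<Longrightarrow> total_deg b \<le> m + i"
    using reg fK IK vK unfolding m_regular_def by blast
  define J where "J = J_of m I"
  have PJ: "poset_ideal m J" unfolding J_def using J_of_poset[OF ssp IK] .
  have "ideal_gen (monom ` MU m J) = (ideal_gen (monom ` K) :: 'k poly_ring set)"
  proof (rule ideal_gen_eqI)
    fix u assume "u \<in> MU m J"
    then obtain r \<alpha> where mk: "marker m J r \<alpha>" and u: "u = E r \<alpha>" unfolding MU_def by blast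
    have rm: "r \<le> m" and ma: "mono_on {1..r} \<alpha>" using mk unfolding marker_def by auto
    define N where "N = n + \<alpha> r"
    define \<phi> where "\<phi> = ext m r \<alpha> (\<lambda>a. if a \<in> {1..m} then N else 0)"
    have "\<phi> \<in> J" unfolding \<phi>_def using ext_in_J[OF mk const_hom] .
    then have "monom (E m \<phi>) \<in> I" unfolding J_def J_of_def by blast
    then obtain k w where k: "k \<in> K" "E m \<phi> = k + w" unfolding IK monom_in_ideal by blast
    have Ephi: "E m \<phi> = E r \<alpha> + (\<Sum>a\<in>{Suc r..m}. var_exp N)"
    proof -
      have "E r \<phi> = E r \<alpha>" by (rule E_cong) (simp add: \<phi>_def ext_eq)
      moreover have "(\<Sum>a\<in>{Suc r..m}. var_exp (\<phi> a)) = (\<Sum>a\<in>{Suc r..m}. var_exp N)"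
        by (rule sum.cong) (auto simp: \<phi>_def ext_def N_def)
      ultimately show ?thesis using E_split[OF rm, of \<phi>] by simp
    qed
    have "Poly_Mapping.lookup k x \<le> Poly_Mapping.lookup (E r \<alpha>) x" for x
    proof (cases "x = N")
      case True
      have "N \<notin> Poly_Mapping.keys k" using kn[OF k(1)] unfolding N_def by auto
      then show ?thesis using True by (simp add: in_keys_iff)
    next
      case False
      have "Poly_Mapping.lookup (E m \<phi>) x = Poly_Mapping.lookup (E r \<alpha>) x"
        unfolding Ephi lookup_add lookup_sum lookup_var_exp using False by simp
      then show ?thesis using k(2) by (simp add: lookup_add)
    qed
    then have "u = k + (u - k)" unfolding u by (intro sub_split) blast
    then show "\<exists>v\<in>K. \<exists>w. u = v + w" using k(1) by blast
  next
    fix k assume k: "k \<in> K"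
    define D where "D = {b\<in>K. \<exists>w. k = b + w}"
    have "k \<in> D" unfolding D_def using k by (intro CollectI conjI exI[of _ 0]) simp_all
    then obtain b where b: "b \<in> D" and bmin: "\<And>b'. b' \<in> D \<Longrightarrow> total_deg b \<le> total_deg b'"
      using ex_has_least_nat[of "\<lambda>x. x \<in> D" k total_deg] by blast
    from b obtain w where bK: "b \<in> K" and kbw: "k = b + w" unfolding D_def by blast
    have mb: "monom b \<in> I" unfolding IK monom_in_ideal using bK by (intro bexI[of _ b] exI[of _ 0]) simp_all
    have minb: "\<forall>j\<in>Poly_Mapping.keys b. monom (b - var_exp j) \<notin> I"
    proof (intro ballI notI)
      fix j assume j: "j \<in> Poly_Mapping.keys b" and mem: "monom (b - var_exp j) \<in> I"
      obtain k' w' where k': "k' \<in> K" "b - var_exp j = k' + w'" using mem unfolding IK monom_in_ideal by blast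
      have bs: "b = (b - var_exp j) + var_exp j" by (rule var_exp_split[OF j])
      then have "k = k' + (w' + var_exp j + w)" using kbw k'(2) by (simp add: algebra_simps)
      then have "k' \<in> D" unfolding D_def using k'(1) by blast
      moreover have "total_deg k' < total_deg b"
        using bs k'(2) total_deg_add[of "b - var_exp j" "var_exp j"] total_deg_add[of k' w'] by simp
      ultimately show False using bmin by fastforce
    qed
    have "betti I n 0 b = 1" using betti0_min[OF mb minb] .
    then have "total_deg b \<le> m + 0" using regb[of b 0] kn[OF bK] by simp
    then have db: "total_deg b \<le> m" by simp
    obtain \<alpha> where \<alpha>: "mono_on {1..total_deg b} \<alpha>" "E (total_deg b) \<alpha> = b"
      using sort_exists[of b "total_deg b"] by blast
    have "marker m J (total_deg b) \<alpha>"
      unfolding marker_def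
    proof (intro conjI ballI impI)
      show "total_deg b \<le> m" by (rule db)
      show "mono_on {1..total_deg b} \<alpha>" by (rule \<alpha>(1))
      fix \<phi> assume \<phi>: "\<phi> \<in> hom_m m" "\<forall>a\<in>{1..total_deg b}. \<phi> a = \<alpha> a"
      have "E m \<phi> = E (total_deg b) \<phi> + (\<Sum>a\<in>{Suc (total_deg b)..m}. var_exp (\<phi> a))"
        using E_split[OF db] .
      moreover have "E (total_deg b) \<phi> = b" using \<alpha>(2) E_cong[of "total_deg b" \<phi> \<alpha>] \<phi>(2) by simp
      ultimately have "monom (E m \<phi>) \<in> I" using monom_ideal_mult[OF mb IK] by simp
      then show "\<phi> \<in> J" unfolding J_def J_of_def using \<phi>(1) by blast
    qed
    then have "b \<in> MU m J" unfolding MU_def using \<alpha>(2)[symmetric] by blast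
    then show "\<exists>u\<in>MU m J. \<exists>w. k = u + w" using kbw by blast
  qed
  then have "Lp2 m J = I" unfolding Lp2_eq IK by simp
  then show ?thesis using PJ unfolding J_def by simp
qed

lemma Lp2_m_regular:
  assumes J: "poset_ideal m J"
  shows "m_regular m (Lp2 m J :: 'k::field poly_ring set)"
proof -
  have ss: "strongly_stable (Lp2 m J :: 'k poly_ring set)" using Lp2_strongly_stable[OF J] .
  then have ssp: "SSP (Lp2 m J :: 'k poly_ring set)" and mi: "monomial_ideal (Lp2 m J :: 'k poly_ring set)"
    unfolding strongly_stable_def SSP_def by auto
  have deg: "\<forall>u\<in>MU m J. total_deg u \<le> m" using MU_deg by blast
  have "betti (Lp2 m J :: 'k poly_ring set) n i b = 0" if "Poly_Mapping.keys b \<subseteq> {0..<n}" "m + i < total_deg b" for n i b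
    using betti_vanish[OF Lp2_eq deg ssp that] .
  then show ?thesis unfolding m_regular_def using mi Lp2_fin_gen[OF J] by (meson not_le)
qed

theorem theorem6p2:
  fixes m :: nat
  assumes "m \<ge> 1"
  shows "(\<forall>J. poset_ideal m J \<longrightarrow>
            strongly_stable (Lp2 m J :: 'k::field poly_ring set) \<and> m_regular m (Lp2 m J :: 'k poly_ring set))
         \<and> bij_betw (Lp2 m :: (nat \<Rightarrow> nat) set \<Rightarrow> 'k poly_ring set)
              {J. poset_ideal m J}
              {I. fin_gen I \<and> strongly_stable I \<and> m_regular m I}"
proof (intro conjI allI impI)
  fix J assume J: "poset_ideal m J"
  show "strongly_stable (Lp2 m J :: 'k poly_ring set)" using Lp2_strongly_stable[OF J] .
  show "m_regular m (Lp2 m J :: 'k poly_ring set)" using Lp2_m_regular[OF J] .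
next
  show "bij_betw (Lp2 m :: (nat \<Rightarrow> nat) set \<Rightarrow> 'k poly_ring set)
              {J. poset_ideal m J}
              {I. fin_gen I \<and> strongly_stable I \<and> m_regular m I}"
    unfolding bij_betw_def
  proof (intro conjI)
    show "inj_on (Lp2 m :: (nat \<Rightarrow> nat) set \<Rightarrow> 'k poly_ring set) {J. poset_ideal m J}"
    proof (rule inj_onI)
      fix J1 J2 assume J1: "J1 \<in> {J. poset_ideal m J}" and J2: "J2 \<in> {J. poset_ideal m J}"
        and eq: "(Lp2 m J1 :: 'k poly_ring set) = Lp2 m J2"
      have "J1 = J_of m (Lp2 m J1 :: 'k poly_ring set)" using recover J1 by (metis mem_Collect_eq)
      also have "\<dots> = J_of m (Lp2 m J2 :: 'k poly_ring set)" using eq by simp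
      also have "\<dots> = J2" using recover J2 by (metis mem_Collect_eq)
      finally show "J1 = J2" .
    qed
    show "(Lp2 m :: (nat \<Rightarrow> nat) set \<Rightarrow> 'k poly_ring set) ` {J. poset_ideal m J}
        = {I. fin_gen I \<and> strongly_stable I \<and> m_regular m I}"
    proof
      show "(Lp2 m :: (nat \<Rightarrow> nat) set \<Rightarrow> 'k poly_ring set) ` {J. poset_ideal m J}
          \<subseteq> {I. fin_gen I \<and> strongly_stable I \<and> m_regular m I}"
        using Lp2_fin_gen Lp2_strongly_stable Lp2_m_regular by blast
      show "{I. fin_gen I \<and> strongly_stable I \<and> m_regular m I}
          \<subseteq> (Lp2 m :: (nat \<Rightarrow> nat) set \<Rightarrow> 'k poly_ring set) ` {J. poset_ideal m J}"
      proof
        fix I :: "'k poly_ring set" assume "I \<in> {I. fin_gen I \<and> strongly_stable I \<and> m_regular m I}"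
        then have "poset_ideal m (J_of m I) \<and> Lp2 m (J_of m I) = I" using surj_part by blast
        then show "I \<in> (Lp2 m :: (nat \<Rightarrow> nat) set \<Rightarrow> 'k poly_ring set) ` {J. poset_ideal m J}" by force
      qed
    qed
  qed
qed


end
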